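(* Let $\theta\ge0$ and $\omega\ge0$. For arbitrary $\varphi,f\in\mathcal P^+$, the polynomial $\varphi(\Delta_{\theta,\omega})f=\sum_{k\ge0}\frac{\varphi^{(k)}(0)}{k!}\Delta_{\theta,\omega}^kf$ also belongs to $\mathcal P^+$.
   Context: $D=d/dz$, $\Delta_{\theta,\omega}=(\theta+\omega z)D+zD^2$. $\mathcal P^+$ is the set of complex polynomials of the form $C\prod_{j=1}^m(z+\pi_j)$ with $C\in\mathbb C$, $m\in\mathbb N_0$, $\pi_j\ge0$ (i.e. polynomials all of whose zeros are real and nonpositive, including constants and the zero polynomial). *)

theory Defs
  imports "HOL-Computational_Algebra.Polynomial"
begin

text \<open>The class P+ of complex polynomials C * prod_j (z + pi_j) with pi_j real, pi_j >= 0
  (includes constants and the zero polynomial).\<close>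
definition Pplus :: "complex poly set" where
  "Pplus = {p. \<exists>(C::complex) (\<pi>s::real list). (\<forall>x\<in>set \<pi>s. x \<ge> 0) \<and>
                 p = smult C (\<Prod>x\<leftarrow>\<pi>s. [:complex_of_real x, 1:])}"

definition Delta :: "real \<Rightarrow> real \<Rightarrow> complex poly \<Rightarrow> complex poly" where
  "Delta \<theta> \<omega> p = [:complex_of_real \<theta>, complex_of_real \<omega>:] * pderiv p
                    + [:0, 1:] * pderiv (pderiv p)"

text \<open>phi(Delta) f = sum_k phi^(k)(0)/k! Delta^k f; phi^(k)(0)/k! is the k-th coefficient.\<close>
definition op_apply :: "complex poly \<Rightarrow> real \<Rightarrow> real \<Rightarrow> complex poly \<Rightarrow> complex poly" where
  "op_apply \<phi> \<theta> \<omega> f = (\<Sum>k\<le>degree \<phi>. smult (coeff \<phi> k) ((Delta \<theta> \<omega> ^^ k) f))"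

end

theory Submission
  imports Defs "HOL-Computational_Algebra.Fundamental_Theorem_Algebra"
begin


lemma Delta_add: "Delta t w (p + q) = Delta t w p + Delta t w q"
  by (simp only: Delta_def pderiv_add distrib_left add_ac)

lemma Delta_smult: "Delta t w (smult c p) = smult c (Delta t w p)"
  by (simp only: Delta_def pderiv_smult mult_smult_right smult_add_right)

lemma Delta_0: "Delta t w 0 = 0"
  by (simp add: Delta_def)

lemma Delta_sum: "Delta t w (\<Sum>k<(N::nat). g k) = (\<Sum>k<N. Delta t w (g k))"
  by (induction N) (simp_all add: Delta_0 Delta_add)

lemma smult_sumr: "smult c (\<Sum>k<(N::nat). g k) = (\<Sum>k<N. smult c (g k))"
  by (induction N) (simp_all add: smult_add_right)

definition opN :: "nat \<Rightarrow> complex poly \<Rightarrow> real \<Rightarrow> real \<Rightarrow> complex poly \<Rightarrow> complex poly" where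
  "opN N p t w f = (\<Sum>k<N. smult (coeff p k) ((Delta t w ^^ k) f))"

lemma opN_eq: assumes "degree p < N" shows "opN N p t w f = op_apply p t w f"
proof -
  have "Suc (degree p) \<le> N" using assms by simp
  then show ?thesis
proof (induction N rule: dec_induct)
  case base
  show ?case by (simp add: opN_def op_apply_def lessThan_Suc_atMost)
next
  case (step n)
  then show ?case by (simp add: opN_def coeff_eq_0)
qed
qed

lemma op_apply_add: "op_apply (p + q) t w f = op_apply p t w f + op_apply q t w f"
proof -
  define N where "N = Suc (max (degree p) (degree q))"
  have "degree (p + q) < N" using degree_add_le_max[of p q] unfolding N_def by simp
  then have "op_apply (p + q) t w f = opN N (p+q) t w f" by (simp add: opN_eq)
  also have "\<dots> = opN N p t w f + opN N q t w f"
    by (simp add: opN_def smult_add_left sum.distrib)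
  also have "\<dots> = op_apply p t w f + op_apply q t w f"
    by (simp add: opN_eq N_def)
  finally show ?thesis .
qed

lemma op_apply_smult: "op_apply (smult c p) t w f = smult c (op_apply p t w f)"
proof -
  define N where "N = Suc (degree p)"
  have "degree (smult c p) < N" using degree_smult_le[of c p] unfolding N_def by simp
  then have "op_apply (smult c p) t w f = opN N (smult c p) t w f" by (simp add: opN_eq)
  also have "\<dots> = smult c (opN N p t w f)"
    by (simp add: opN_def smult_sumr smult_smult)
  also have "\<dots> = smult c (op_apply p t w f)"
    by (simp add: opN_eq N_def)
  finally show ?thesis .
qed

lemma op_apply_X: "op_apply (pCons 0 p) t w f = Delta t w (op_apply p t w f)"
proof -
  define N where "N = Suc (degree p)"
  have "degree (pCons 0 p) < Suc N" using degree_pCons_le[of 0 p] unfolding N_def by simp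
  then have "op_apply (pCons 0 p) t w f = opN (Suc N) (pCons 0 p) t w f" by (simp add: opN_eq)
  also have "\<dots> = (\<Sum>k<N. smult (coeff p k) ((Delta t w ^^ Suc k) f))"
    unfolding opN_def by (subst sum.lessThan_Suc_shift) simp
  also have "\<dots> = Delta t w (opN N p t w f)"
    by (simp add: opN_def Delta_sum Delta_smult)
  also have "\<dots> = Delta t w (op_apply p t w f)"
    by (simp add: opN_eq N_def)
  finally show ?thesis .
qed

lemma op_apply_lin: "op_apply ([:c, 1:] * p) t w f = smult c (op_apply p t w f) + Delta t w (op_apply p t w f)"
proof -
  have "[:c, 1:] * p = smult c p + pCons 0 p" by simp
  then show ?thesis by (simp add: op_apply_add op_apply_smult op_apply_X)
qed

lemma op_apply_one: "op_apply 1 t w f = f"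
  by (simp add: op_apply_def)



abbreviation pr :: "real list \<Rightarrow> complex poly" where
  "pr xs \<equiv> (\<Prod>x\<leftarrow>xs. [:complex_of_real x, 1:])"

lemma Pplus_I: "\<forall>x\<in>set xs. x \<ge> 0 \<Longrightarrow> smult C (pr xs) \<in> Pplus"
  unfolding Pplus_def by blast

lemma Pplus_smult: "p \<in> Pplus \<Longrightarrow> smult c p \<in> Pplus"
proof -
  assume "p \<in> Pplus"
  then obtain C xs where "\<forall>x\<in>set xs. x \<ge> 0" "p = smult C (pr xs)" unfolding Pplus_def by blast
  then have "smult c p = smult (c * C) (pr xs)" by simp
  then show ?thesis using Pplus_I[OF \<open>\<forall>x\<in>set xs. x \<ge> 0\<close>] by simp
qed

lemma Pplus_roots:
  fixes p :: "complex poly"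
  assumes "\<forall>z. poly p z = 0 \<longrightarrow> Im z = 0 \<and> Re z \<le> 0"
  shows "p \<in> Pplus"
  using assms
proof (induction "degree p" arbitrary: p rule: less_induct)
  case less
  show ?case
  proof (cases "degree p = 0")
    case True
    then obtain a where "p = [:a:]" using degree0_coeffs by blast
    then have "p = smult a (pr [])" by simp
    then show ?thesis using Pplus_I[of "[]" a] by simp
  next
    case False
    then have "\<not> constant (poly p)" by (simp add: constant_degree)
    then obtain z where z: "poly p z = 0" using fundamental_theorem_of_algebra by blast
    then have zz: "Im z = 0" "Re z \<le> 0" using less.prems by auto
    from z obtain q where q: "p = [:-z, 1:] * q" using poly_eq_0_iff_dvd by (metis dvdE)
    have "p \<noteq> 0" using False by auto
    then have "q \<noteq> 0" using q by auto
    then have dq: "degree q < degree p" unfolding q by (subst degree_mult_eq) auto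
    have "\<forall>w. poly q w = 0 \<longrightarrow> Im w = 0 \<and> Re w \<le> 0" using less.prems q by auto
    from less.hyps[OF dq this] obtain C xs where xs: "\<forall>x\<in>set xs. x \<ge> 0" "q = smult C (pr xs)"
      unfolding Pplus_def by blast
    have "-z = complex_of_real (- Re z)" using zz by (simp add: complex_eq_iff)
    then have pe: "p = smult C (pr ((- Re z) # xs))" using q xs by (simp add: mult.left_commute)
    have h: "\<forall>x\<in>set ((- Re z) # xs). x \<ge> 0" using xs zz by auto
    show ?thesis unfolding pe by (rule Pplus_I[OF h])
  qed
qed

definition good :: "complex \<Rightarrow> bool" where "good z \<longleftrightarrow> Im z = 0 \<and> Re z \<le> 0"

lemma add_ne0: "x \<ge> 0 \<Longrightarrow> \<not> good z \<Longrightarrow> z + complex_of_real x \<noteq> 0"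
  unfolding good_def by (auto simp: complex_eq_iff)

lemma poly_pr_ne0: "\<forall>x\<in>set xs. x \<ge> 0 \<Longrightarrow> \<not> good z \<Longrightarrow> poly (pr xs) z \<noteq> 0"
proof (induction xs)
  case Nil then show ?case by simp
next
  case (Cons x xs)
  have "poly (pr (x # xs)) z = (z + complex_of_real x) * poly (pr xs) z" by (simp add: algebra_simps)
  then show ?case using Cons add_ne0[of x z] by simp
qed

lemma degree_pr: "degree (pr xs) = length xs"
proof (induction xs)
  case Nil then show ?case by simp
next
  case (Cons x xs)
  have "pr xs \<noteq> 0" by (auto simp: prod_list_zero_iff)
  then show ?case using Cons
    by (simp only: list.map prod_list.Cons) (subst degree_mult_eq; simp)
qed

lemma pderiv_pr: "\<forall>x\<in>set xs. x \<ge> 0 \<Longrightarrow> \<not> good z \<Longrightarrow>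
   poly (pderiv (pr xs)) z = poly (pr xs) z * (\<Sum>x\<leftarrow>xs. 1 / (z + complex_of_real x))"
proof (induction xs)
  case Nil then show ?case by simp
next
  case (Cons x xs)
  have ne: "z + complex_of_real x \<noteq> 0" using Cons.prems add_ne0 by auto
  have "poly (pderiv (pr (x # xs))) z = poly (pr xs) z + (z + complex_of_real x) * poly (pderiv (pr xs)) z"
    by (simp add: pderiv_add pderiv_smult pderiv_pCons algebra_simps)
  also have "\<dots> = poly (pr (x # xs)) z * (\<Sum>x\<leftarrow>x#xs. 1 / (z + complex_of_real x))"
  proof -
    define P where "P = poly (pr xs) z"
    define S where "S = (\<Sum>x\<leftarrow>xs. 1 / (z + complex_of_real x))"
    have "poly (pr (x # xs)) z = (z + complex_of_real x) * P" by (simp add: P_def algebra_simps)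
    moreover have "(z + complex_of_real x) * P * (1 / (z + complex_of_real x) + S) = P + (z + complex_of_real x) * (P * S)"
      using ne by (simp add: distrib_left)
    ultimately show ?thesis using Cons by (simp add: P_def S_def)
  qed
  finally show ?case .
qed



lemma im_recip: "x \<ge> 0 \<Longrightarrow> Im z \<noteq> 0 \<Longrightarrow> Im (1 / (z + complex_of_real x)) * Im z < 0"
proof -
  assume x: "x \<ge> 0" and s: "Im z \<noteq> 0"
  have d: "(Re z + x)\<^sup>2 + (Im z)\<^sup>2 > 0" using s by (simp add: add_nonneg_pos)
  have "Im (1 / (z + complex_of_real x)) * Im z = - (Im z)\<^sup>2 / ((Re z + x)\<^sup>2 + (Im z)\<^sup>2)"
    by (simp add: Im_divide power2_eq_square)
  also have "\<dots> < 0" using d s by (simp add: divide_neg_pos)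
  finally show ?thesis .
qed

lemma im_w: "x \<ge> 0 \<Longrightarrow> Im (z / (z + complex_of_real x)) * Im z \<ge> 0"
proof -
  assume x: "x \<ge> 0"
  have "Im (z / (z + complex_of_real x)) * Im z = x * (Im z)\<^sup>2 / ((Re z + x)\<^sup>2 + (Im z)\<^sup>2)"
    by (simp add: Im_divide power2_eq_square algebra_simps)
  also have "\<dots> \<ge> 0" using x by simp
  finally show ?thesis .
qed

lemma re_recip: "x \<ge> 0 \<Longrightarrow> Im z = 0 \<Longrightarrow> Re z > 0 \<Longrightarrow> Re (1 / (z + complex_of_real x)) > 0"
  by (simp add: Re_divide power2_eq_square)

lemma re_w: "x \<ge> 0 \<Longrightarrow> Im z = 0 \<Longrightarrow> Re z > 0 \<Longrightarrow> Re (z / (z + complex_of_real x)) \<ge> 0"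
  by (simp add: Re_divide power2_eq_square)

lemma sum_im_recip: "xs \<noteq> [] \<Longrightarrow> \<forall>x\<in>set xs. x \<ge> 0 \<Longrightarrow> Im z \<noteq> 0 \<Longrightarrow>
    Im (\<Sum>x\<leftarrow>xs. 1 / (z + complex_of_real x)) * Im z < 0"
proof (induction xs)
  case Nil then show ?case by simp
next
  case (Cons a xs)
  have h: "Im (1 / (z + complex_of_real a)) * Im z < 0" using Cons.prems im_recip by auto
  show ?case
  proof (cases "xs = []")
    case True then show ?thesis using h by simp
  next
    case False
    then have "Im (\<Sum>x\<leftarrow>xs. 1 / (z + complex_of_real x)) * Im z < 0" using Cons by auto
    then show ?thesis using h by (simp add: distrib_right)
  qed
qed

lemma sum_re_recip: "xs \<noteq> [] \<Longrightarrow> \<forall>x\<in>set xs. x \<ge> 0 \<Longrightarrow> Im z = 0 \<Longrightarrow> Re z > 0 \<Longrightarrow>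
    Re (\<Sum>x\<leftarrow>xs. 1 / (z + complex_of_real x)) > 0"
proof (induction xs)
  case Nil then show ?case by simp
next
  case (Cons a xs)
  have h: "Re (1 / (z + complex_of_real a)) > 0" using Cons.prems re_recip by auto
  show ?case
  proof (cases "xs = []")
    case True then show ?thesis using h by simp
  next
    case False
    then have "Re (\<Sum>x\<leftarrow>xs. 1 / (z + complex_of_real x)) > 0" using Cons by auto
    then show ?thesis using h by simp
  qed
qed

lemma sum_im_w: "\<forall>x\<in>set xs. x \<ge> 0 \<Longrightarrow> Im (\<Sum>x\<leftarrow>xs. z / (z + complex_of_real x)) * Im z \<ge> 0"
proof (induction xs)
  case Nil then show ?case by simp
next
  case (Cons a xs)
  have h: "Im (z / (z + complex_of_real a)) * Im z \<ge> 0" using Cons.prems im_w by auto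
  have "Im (\<Sum>x\<leftarrow>xs. z / (z + complex_of_real x)) * Im z \<ge> 0" using Cons by auto
  then show ?case using h by (simp add: distrib_right)
qed

lemma sum_re_w: "\<forall>x\<in>set xs. x \<ge> 0 \<Longrightarrow> Im z = 0 \<Longrightarrow> Re z > 0 \<Longrightarrow>
   Re (\<Sum>x\<leftarrow>xs. z / (z + complex_of_real x)) \<ge> 0"
proof (induction xs)
  case Nil then show ?case by simp
next
  case (Cons a xs)
  have h: "Re (z / (z + complex_of_real a)) \<ge> 0" using Cons.prems re_w by auto
  have "Re (\<Sum>x\<leftarrow>xs. z / (z + complex_of_real x)) \<ge> 0" using Cons by auto
  then show ?case using h by simp
qed

lemma sum_mult_z: "z * (\<Sum>x\<leftarrow>xs. 1 / (z + complex_of_real x)) = (\<Sum>x\<leftarrow>xs. z / (z + complex_of_real x))"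
  by (induction xs) (simp_all add: distrib_left)

lemma S_ne0: "xs \<noteq> [] \<Longrightarrow> \<forall>x\<in>set xs. x \<ge> 0 \<Longrightarrow> \<not> good z \<Longrightarrow>
    (\<Sum>x\<leftarrow>xs. 1 / (z + complex_of_real x)) \<noteq> 0"
proof -
  assume a: "xs \<noteq> []" "\<forall>x\<in>set xs. x \<ge> 0" "\<not> good z"
  show ?thesis
  proof (cases "Im z = 0")
    case True
    then have "Re z > 0" using a(3) by (auto simp: good_def)
    then show ?thesis using sum_re_recip[OF a(1,2) True] by auto
  next
    case False
    then show ?thesis using sum_im_recip[OF a(1,2) False] by auto
  qed
qed

lemma Pplus_pderiv: "f \<in> Pplus \<Longrightarrow> pderiv f \<in> Pplus"
proof -
  assume "f \<in> Pplus"
  then obtain C xs where xs: "\<forall>x\<in>set xs. x \<ge> 0" "f = smult C (pr xs)" unfolding Pplus_def by blast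
  have z: "(0::complex poly) \<in> Pplus" using Pplus_I[of "[]" 0] by simp
  show ?thesis
  proof (cases "C = 0 \<or> xs = []")
    case True then show ?thesis using xs z by (auto simp: pderiv_smult)
  next
    case False
    show ?thesis
    proof (rule Pplus_roots, intro allI impI)
      fix w assume r: "poly (pderiv f) w = 0"
      show "Im w = 0 \<and> Re w \<le> 0"
      proof (rule ccontr)
        assume "\<not> (Im w = 0 \<and> Re w \<le> 0)"
        then have ng: "\<not> good w" by (simp add: good_def)
        have "poly (pderiv f) w = C * (poly (pr xs) w * (\<Sum>x\<leftarrow>xs. 1 / (w + complex_of_real x)))"
          using xs pderiv_pr[OF xs(1) ng] by (simp add: pderiv_smult)
        moreover have "poly (pr xs) w \<noteq> 0" using poly_pr_ne0[OF xs(1) ng] .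
        moreover have "(\<Sum>x\<leftarrow>xs. 1 / (w + complex_of_real x)) \<noteq> 0" using S_ne0 False xs ng by auto
        ultimately show False using r False by simp
      qed
    qed
  qed
qed

lemma key_alg:
  fixes K S z CA U :: complex and p t w :: real
  assumes "K \<noteq> 0" "S \<noteq> 0" "z \<noteq> 0" "p * CA + (t + w * z) * K + z * (K * U) = 0" "CA * S = K"
  shows "p / (z * S) + t / z + w + U = 0"
proof -
  have ca: "CA = K / S" using assms(2,5) by (simp add: field_simps)
  have "K * (p / S + t + w * z + z * U) = 0" using assms(4) unfolding ca by (simp add: algebra_simps)
  then have "p / S + t + w * z + z * U = 0" using assms(1) by simp
  then have "(p / S + t + w * z + z * U) / z = 0" by simp
  then show ?thesis using assms(3) by (simp add: field_simps)
qed



lemma Pplus_zero: "(0::complex poly) \<in> Pplus" using Pplus_I[of "[]" 0] by simp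

lemma contra_im:
  fixes S z U :: complex and p t w :: real
  assumes "Im z \<noteq> 0" "p \<ge> 0" "t \<ge> 0" "Im (z * S) * Im z \<ge> 0" "Im U * Im z < 0"
  shows "p / (z * S) + t / z + w + U \<noteq> 0"
proof
  assume e: "p / (z * S) + t / z + w + U = 0"
  define W where "W = z * S"
  have "Im (p / W) * Im z = - p * (Im W * Im z) / ((Re W)\<^sup>2 + (Im W)\<^sup>2)"
    by (simp add: Im_divide)
  also have "\<dots> \<le> 0" using assms(2,4) unfolding W_def
    by (intro divide_nonpos_nonneg) (simp_all add: mult_nonneg_nonneg)
  finally have a: "Im (p / W) * Im z \<le> 0" .
  have "Im (t / z) * Im z = - t * (Im z * Im z) / ((Re z)\<^sup>2 + (Im z)\<^sup>2)"
    by (simp add: Im_divide)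
  also have "\<dots> \<le> 0" using assms(3)
    by (intro divide_nonpos_nonneg) simp_all
  finally have b: "Im (t / z) * Im z \<le> 0" .
  have "Im (p / W + t / z + w + U) * Im z = Im (p / W) * Im z + Im (t / z) * Im z + Im U * Im z"
    by (simp add: distrib_right)
  also have "\<dots> < 0" using a b assms(5) by linarith
  finally show False using e unfolding W_def by simp
qed

lemma contra_re:
  fixes S z U :: complex and p t w :: real
  assumes "Im z = 0" "Re z > 0" "p \<ge> 0" "t \<ge> 0" "w \<ge> 0" "Re (z * S) \<ge> 0" "Re U > 0"
  shows "p / (z * S) + t / z + w + U \<noteq> 0"
proof
  assume e: "p / (z * S) + t / z + w + U = 0"
  define W where "W = z * S"
  have "Re (p / W) = p * Re W / ((Re W)\<^sup>2 + (Im W)\<^sup>2)"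
    by (simp add: Re_divide)
  also have "\<dots> \<ge> 0" using assms(3,6) unfolding W_def by simp
  finally have a: "Re (p / W) \<ge> 0" .
  have "Re (t / z) = t * Re z / ((Re z)\<^sup>2 + (Im z)\<^sup>2)"
    by (simp add: Re_divide)
  also have "\<dots> \<ge> 0" using assms(2,4) by simp
  finally have b: "Re (t / z) \<ge> 0" .
  have "Re (p / W + t / z + w + U) > 0" using a b assms(5,7) by simp
  then show False using e unfolding W_def by simp
qed

lemma main_step:
  fixes t w p :: real and f :: "complex poly"
  assumes t: "t \<ge> 0" and w: "w \<ge> 0" and p: "p \<ge> 0" and f: "f \<in> Pplus"
  shows "smult (complex_of_real p) f + Delta t w f \<in> Pplus"
proof -
  obtain C xs where xs: "\<forall>x\<in>set xs. x \<ge> 0" and fe: "f = smult C (pr xs)"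
    using f unfolding Pplus_def by blast
  consider "C = 0" | "C \<noteq> 0" "length xs = 0" | "C \<noteq> 0" "length xs = 1" | "C \<noteq> 0" "length xs \<ge> 2"
    by linarith
  then show ?thesis
  proof cases
    case 1
    then show ?thesis using fe Pplus_zero by (simp add: Delta_def)
  next
    case 2
    then have "Delta t w f = 0" using fe by (simp add: Delta_def pderiv_smult)
    then show ?thesis using Pplus_smult[OF f] by simp
  next
    case 3
    then obtain a where a: "xs = [a]" by (metis One_nat_def length_0_conv length_Suc_conv)
    have fa: "f = smult C [:complex_of_real a, 1:]" using fe a by simp
    have "Delta t w f = smult C [:complex_of_real t, complex_of_real w:]"
      unfolding fa Delta_def by (simp add: pderiv_smult pderiv_pCons)
    then have g: "smult (complex_of_real p) f + Delta t w f
        = smult C [:complex_of_real (p * a + t), complex_of_real (p + w):]"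
      unfolding fa by (simp add: smult_add_right algebra_simps)
    show ?thesis
    proof (cases "p + w = 0")
      case True
      then have "smult (complex_of_real p) f + Delta t w f = smult (C * complex_of_real (p * a + t)) (pr [])"
        unfolding g by simp
      then show ?thesis using Pplus_I[of "[]"] by simp
    next
      case False
      then have pw: "p + w > 0" using p w by simp
      have ge: "smult (complex_of_real p) f + Delta t w f
          = smult (C * complex_of_real (p + w)) (pr [(p * a + t) / (p + w)])"
        unfolding g using pw by (simp add: complex_eq_iff field_simps)
      have h: "\<forall>x\<in>set [(p * a + t) / (p + w)]. x \<ge> 0" using pw p t xs a by simp
      show ?thesis unfolding ge by (rule Pplus_I[OF h])
    qed
  next
    case 4
    have "pderiv f \<in> Pplus" using Pplus_pderiv[OF f] .
    then obtain C' ys where ys: "\<forall>x\<in>set ys. x \<ge> 0" and fe': "pderiv f = smult C' (pr ys)"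
      unfolding Pplus_def by blast
    have "degree f = length xs" using fe 4 by (simp add: degree_pr)
    then have "degree (pderiv f) = length xs - 1" by (simp add: degree_pderiv)
    then have dg: "degree (smult C' (pr ys)) \<ge> 1" using 4 fe' by simp
    then have C': "C' \<noteq> 0" by (cases "C' = 0") auto
    then have "length ys \<ge> 1" using dg by (simp add: degree_pr)
    then have ysne: "ys \<noteq> []" by auto
    have xsne: "xs \<noteq> []" using 4 by auto
    show ?thesis
    proof (rule Pplus_roots, intro allI impI)
      fix z assume r: "poly (smult (complex_of_real p) f + Delta t w f) z = 0"
      show "Im z = 0 \<and> Re z \<le> 0"
      proof (rule ccontr)
        assume "\<not> (Im z = 0 \<and> Re z \<le> 0)"
        then have ng: "\<not> good z" by (simp add: good_def)
        then have z0: "z \<noteq> 0" by (auto simp: good_def)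
        define A where "A = poly (pr xs) z"
        define B where "B = poly (pr ys) z"
        define S where "S = (\<Sum>x\<leftarrow>xs. 1 / (z + complex_of_real x))"
        define U where "U = (\<Sum>x\<leftarrow>ys. 1 / (z + complex_of_real x))"
        have B0: "B \<noteq> 0" using poly_pr_ne0[OF ys ng] B_def by simp
        have S0: "S \<noteq> 0" using S_ne0[OF xsne xs ng] S_def by simp
        have d1: "poly (pderiv f) z = C * A * S"
          using pderiv_pr[OF xs ng] unfolding fe A_def S_def by (simp add: pderiv_smult)
        have d1': "poly (pderiv f) z = C' * B" using fe' B_def by simp
        have d2: "poly (pderiv (pderiv f)) z = C' * B * U"
          using pderiv_pr[OF ys ng] unfolding fe' B_def U_def by (simp add: pderiv_smult)
        have "poly (smult (complex_of_real p) f + Delta t w f) z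
           = p * (C * A) + (t + w * z) * (C' * B) + z * ((C' * B) * U)"
          unfolding Delta_def using d1' d2 fe A_def by (simp add: algebra_simps)
        then have eq: "p * (C * A) + (t + w * z) * (C' * B) + z * ((C' * B) * U) = 0" using r by simp
        have E: "p / (z * S) + t / z + w + U = 0"
          by (rule key_alg[OF _ S0 z0 eq]) (use C' B0 d1 d1' in auto)
        have zS: "z * S = (\<Sum>x\<leftarrow>xs. z / (z + complex_of_real x))" unfolding S_def by (rule sum_mult_z)
        show False
        proof (cases "Im z = 0")
          case True
          then have "Re z > 0" using ng by (auto simp: good_def)
          have "Re (z * S) \<ge> 0" unfolding zS using sum_re_w[OF xs True \<open>Re z > 0\<close>] .
          moreover have "Re U > 0" unfolding U_def using sum_re_recip[OF ysne ys True \<open>Re z > 0\<close>] .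
          ultimately show False using contra_re[OF True \<open>Re z > 0\<close> p t w] E by blast
        next
          case False
          have "Im (z * S) * Im z \<ge> 0" unfolding zS using sum_im_w[OF xs] .
          moreover have "Im U * Im z < 0" unfolding U_def using sum_im_recip[OF ysne ys False] .
          ultimately show False using contra_im[OF False p t] E by blast
        qed
      qed
    qed
  qed
qed


lemma op_apply_pr:
  assumes "t \<ge> 0" "w \<ge> 0" "f \<in> Pplus" "\<forall>x\<in>set xs. x \<ge> 0"
  shows "op_apply (pr xs) t w f \<in> Pplus"
  using assms(4)
proof (induction xs)
  case Nil then show ?case using assms(3) by (simp add: op_apply_one)
next
  case (Cons x xs)
  have "op_apply (pr (x # xs)) t w f = smult (complex_of_real x) (op_apply (pr xs) t w f) + Delta t w (op_apply (pr xs) t w f)"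
    by (simp only: list.map prod_list.Cons op_apply_lin)
  then show ?case using main_step[OF assms(1,2), of x] Cons by simp
qed

theorem lemma2:
  fixes \<theta> \<omega> :: real and \<phi> f :: "complex poly"
  assumes "\<theta> \<ge> 0" and "\<omega> \<ge> 0" and "\<phi> \<in> Pplus" and "f \<in> Pplus"
  shows "op_apply \<phi> \<theta> \<omega> f \<in> Pplus"
proof -
  obtain C xs where xs: "\<forall>x\<in>set xs. x \<ge> 0" and pe: "\<phi> = smult C (pr xs)"
    using assms(3) unfolding Pplus_def by blast
  show ?thesis unfolding pe op_apply_smult
    by (rule Pplus_smult, rule op_apply_pr[OF assms(1,2,4) xs])
qed

end
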